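(* Let $\mathcal G=(V_{\min},V_{\max},E,w,\lambda)$ be a discounted payoff game, not all of whose joint strategies are co-optimal, with contraction $\lambda^*$ and gap $\gamma$, and let $\mathcal G'=(V_{\min},V_{\max},E,w',\lambda)$ differ from $\mathcal G$ only in the edge weights, such that $|w_e-w'_e|\le\frac{1-\lambda^*}{3}\gamma$ for all $e\in E$. Then every joint strategy that is co-optimal for $\mathcal G'$ is also co-optimal for $\mathcal G$.
   Context: A discounted payoff game is a tuple $\mathcal G=(V_{\min},V_{\max},E,w,\lambda)$ with $V=V_{\min}\cup V_{\max}$ finite (disjoint union of Min and Max vertices), $E\subseteq V\times V$ with every vertex having an outgoing edge, $w:E\to\mathbb R$, $\lambda:E\to[0,1)$. The outcome of a play $e_0e_1\ldots$ is $\sum_{i\ge0}w_{e_i}\prod_{j<i}\lambda_{e_j}$. A joint strategy is a map $\sigma:V\to V$ with $(v,\sigma(v))\in E$; $\mathrm{val}(\sigma)(v)$ is the outcome of the play from $v$ following $\sigma$; the game value is $\mathrm{val}(\mathcal G)(v)=\sup_{\sigma_{\max}}\inf_{\sigma_{\min}}$ of the outcome from $v$ over positional strategies; $\sigma$ is co-optimal iff $\mathrm{val}(\sigma)=\mathrm{val}(\mathcal G)$. $\mathsf{offset}(x,(v,v'))=x(v)-(w_{(v,v')}+\lambda_{(v,v')}x(v'))$ if $v\in V_{\max}$, and $(w_{(v,v')}+\lambda_{(v,v')}x(v'))-x(v)$ otherwise. The contraction is $\lambda^*=\max\{\lambda_e\mid e\in E\}$. For a joint strategy $\sigma$ that is not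 co-optimal, $\gamma_\sigma=-\min\{\mathsf{offset}(\mathrm{val}(\sigma),e)\mid e\in E\}$ (which is $>0$); the gap $\gamma$ of $\mathcal G$ is the minimum of $\gamma_\sigma$ over all non-co-optimal joint strategies $\sigma$. *)

theory Defs
  imports Complex_Main
begin

text \<open>A discounted payoff game over a finite vertex type 'v: Max vertices are the set Vmax,
  Min vertices are its complement; E is the edge relation, w the weights, lam the discounts.\<close>

definition discounted_game :: "'v::finite set \<Rightarrow> ('v \<times> 'v) set \<Rightarrow> ('v \<times> 'v \<Rightarrow> real) \<Rightarrow> bool" where
  "discounted_game Vmax E lam \<longleftrightarrow> (\<forall>v. \<exists>v'. (v, v') \<in> E) \<and> (\<forall>e\<in>E. 0 \<le> lam e \<and> lam e < 1)"

definition joint_strategy :: "('v \<times> 'v) set \<Rightarrow> ('v \<Rightarrow> 'v) \<Rightarrow> bool" where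
  "joint_strategy E \<sigma> \<longleftrightarrow> (\<forall>v. (v, \<sigma> v) \<in> E)"

definition strategy_on :: "('v \<times> 'v) set \<Rightarrow> 'v set \<Rightarrow> ('v \<Rightarrow> 'v) \<Rightarrow> bool" where
  "strategy_on E S s \<longleftrightarrow> (\<forall>u\<in>S. (u, s u) \<in> E)"

definition combine :: "'v set \<Rightarrow> ('v \<Rightarrow> 'v) \<Rightarrow> ('v \<Rightarrow> 'v) \<Rightarrow> 'v \<Rightarrow> 'v" where
  "combine Vmax smax smin = (\<lambda>u. if u \<in> Vmax then smax u else smin u)"

definition play :: "('v \<Rightarrow> 'v) \<Rightarrow> 'v \<Rightarrow> nat \<Rightarrow> 'v" where
  "play \<sigma> v i = (\<sigma> ^^ i) v"

definition val_strat :: "('v \<times> 'v \<Rightarrow> real) \<Rightarrow> ('v \<times> 'v \<Rightarrow> real) \<Rightarrow> ('v \<Rightarrow> 'v) \<Rightarrow> 'v \<Rightarrow> real" where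
  "val_strat w lam \<sigma> v =
     (\<Sum>i. w (play \<sigma> v i, play \<sigma> v (Suc i)) * (\<Prod>j<i. lam (play \<sigma> v j, play \<sigma> v (Suc j))))"

definition game_val :: "'v set \<Rightarrow> ('v \<times> 'v) set \<Rightarrow> ('v \<times> 'v \<Rightarrow> real) \<Rightarrow> ('v \<times> 'v \<Rightarrow> real) \<Rightarrow> 'v \<Rightarrow> real" where
  "game_val Vmax E w lam v =
     (SUP smax\<in>{s. strategy_on E Vmax s}. INF smin\<in>{s. strategy_on E (- Vmax) s}.
        val_strat w lam (combine Vmax smax smin) v)"

definition co_optimal :: "'v set \<Rightarrow> ('v \<times> 'v) set \<Rightarrow> ('v \<times> 'v \<Rightarrow> real) \<Rightarrow> ('v \<times> 'v \<Rightarrow> real) \<Rightarrow> ('v \<Rightarrow> 'v) \<Rightarrow> bool" where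
  "co_optimal Vmax E w lam \<sigma> \<longleftrightarrow> joint_strategy E \<sigma> \<and> val_strat w lam \<sigma> = game_val Vmax E w lam"

fun offset :: "'v set \<Rightarrow> ('v \<times> 'v \<Rightarrow> real) \<Rightarrow> ('v \<times> 'v \<Rightarrow> real) \<Rightarrow> ('v \<Rightarrow> real) \<Rightarrow> 'v \<times> 'v \<Rightarrow> real" where
  "offset Vmax w lam x (v, v') =
     (if v \<in> Vmax then x v - (w (v, v') + lam (v, v') * x v')
      else (w (v, v') + lam (v, v') * x v') - x v)"

definition contraction :: "('v \<times> 'v) set \<Rightarrow> ('v \<times> 'v \<Rightarrow> real) \<Rightarrow> real" where
  "contraction E lam = Max (lam ` E)"

definition gamma_strat :: "'v set \<Rightarrow> ('v \<times> 'v) set \<Rightarrow> ('v \<times> 'v \<Rightarrow> real) \<Rightarrow> ('v \<times> 'v \<Rightarrow> real) \<Rightarrow> ('v \<Rightarrow> 'v) \<Rightarrow> real" where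
  "gamma_strat Vmax E w lam \<sigma> = - Min (offset Vmax w lam (val_strat w lam \<sigma>) ` E)"

definition gap :: "'v set \<Rightarrow> ('v \<times> 'v) set \<Rightarrow> ('v \<times> 'v \<Rightarrow> real) \<Rightarrow> ('v \<times> 'v \<Rightarrow> real) \<Rightarrow> real" where
  "gap Vmax E w lam = Min (gamma_strat Vmax E w lam ` {\<sigma>. joint_strategy E \<sigma> \<and> \<not> co_optimal Vmax E w lam \<sigma>})"

end

theory Submission
  imports Defs
begin

lemma fin_argmin:
  fixes f :: "'a \<Rightarrow> real"
  assumes "finite A" "A \<noteq> {}"
  shows "\<exists>a\<in>A. \<forall>b\<in>A. f a \<le> f b"
proof -
  have "Min (f ` A) \<in> f ` A" using assms by auto
  then obtain a where a: "a \<in> A" "f a = Min (f ` A)" by auto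
  show ?thesis using a assms by (metis Min_le finite_imageI imageI)
qed

lemma fin_argmax:
  fixes f :: "'a \<Rightarrow> real"
  assumes "finite A" "A \<noteq> {}"
  shows "\<exists>a\<in>A. \<forall>b\<in>A. f b \<le> f a"
proof -
  have "Max (f ` A) \<in> f ` A" using assms by auto
  then obtain a where a: "a \<in> A" "f a = Max (f ` A)" by auto
  show ?thesis using a assms by (metis Max_ge finite_imageI imageI)
qed

lemma play_0: "play \<tau> u 0 = u" by (simp add: play_def)
lemma play_Suc: "play \<tau> u (Suc i) = play \<tau> (\<tau> u) i"
  by (simp add: play_def funpow_swap1)

definition trm :: "('v \<times> 'v \<Rightarrow> real) \<Rightarrow> ('v \<times> 'v \<Rightarrow> real) \<Rightarrow> ('v \<Rightarrow> 'v) \<Rightarrow> 'v \<Rightarrow> nat \<Rightarrow> real" where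
  "trm w lam \<tau> u i = w (play \<tau> u i, play \<tau> u (Suc i)) * (\<Prod>j<i. lam (play \<tau> u j, play \<tau> u (Suc j)))"

lemma val_trm: "val_strat w lam \<tau> u = suminf (trm w lam \<tau> u)"
  unfolding val_strat_def by (rule arg_cong[where f=suminf]) (simp add: trm_def fun_eq_iff)

lemma trm_0: "trm w lam \<tau> u 0 = w (u, \<tau> u)"
  by (simp add: trm_def play_0 play_Suc)

lemma trm_Suc: "trm w lam \<tau> u (Suc i) = lam (u, \<tau> u) * trm w lam \<tau> (\<tau> u) i"
  unfolding trm_def prod.lessThan_Suc_shift by (simp add: play_Suc play_0)

locale dg =
  fixes Vmax :: "'v::finite set" and E :: "('v \<times> 'v) set" and lam :: "'v \<times> 'v \<Rightarrow> real"
  assumes game: "discounted_game Vmax E lam"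
begin

definition LL where "LL = contraction E lam"

lemma has_edge: "\<exists>v'. (v, v') \<in> E" using game by (simp add: discounted_game_def)
lemma E_ne: "E \<noteq> {}" using has_edge by blast
lemma finE: "finite E" by simp
lemma lam_nn: "e \<in> E \<Longrightarrow> 0 \<le> lam e" using game by (simp add: discounted_game_def)
lemma lam_lt1: "e \<in> E \<Longrightarrow> lam e < 1" using game by (simp add: discounted_game_def)
lemma lam_le_L: "e \<in> E \<Longrightarrow> lam e \<le> LL"
  unfolding LL_def contraction_def by (simp add: finE)
lemma L_nn: "0 \<le> LL"
  using E_ne lam_nn lam_le_L by (meson all_not_in_conv order_trans)
lemma L_lt1: "LL < 1"
proof -
  have "LL \<in> lam ` E" unfolding LL_def contraction_def using E_ne by (simp add: finE)
  then show ?thesis using lam_lt1 by auto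
qed

definition WW :: "('v \<times> 'v \<Rightarrow> real) \<Rightarrow> real" where "WW w = Max ((\<lambda>e. \<bar>w e\<bar>) ` E)"
lemma w_le_W: "e \<in> E \<Longrightarrow> \<bar>w e\<bar> \<le> WW w"
  unfolding WW_def by (simp add: finE)

lemma trm_bound:
  assumes "joint_strategy E \<tau>"
  shows "\<bar>trm w lam \<tau> u i\<bar> \<le> WW w * LL ^ i"
proof (induction i arbitrary: u)
  case 0
  then show ?case using assms w_le_W by (simp add: trm_0 joint_strategy_def)
next
  case (Suc i)
  have e: "(u, \<tau> u) \<in> E" using assms by (simp add: joint_strategy_def)
  have "\<bar>trm w lam \<tau> u (Suc i)\<bar> = lam (u, \<tau> u) * \<bar>trm w lam \<tau> (\<tau> u) i\<bar>"
    using lam_nn[OF e] by (simp add: trm_Suc abs_mult)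
  also have "\<dots> \<le> LL * (WW w * LL ^ i)"
    using Suc.IH lam_le_L[OF e] lam_nn[OF e] L_nn by (meson abs_ge_zero mult_mono)
  finally show ?case by (simp add: algebra_simps)
qed

lemma trm_summable:
  assumes "joint_strategy E \<tau>"
  shows "summable (trm w lam \<tau> u)"
proof (rule summable_comparison_test)
  show "\<exists>N. \<forall>n\<ge>N. norm (trm w lam \<tau> u n) \<le> WW w * LL ^ n"
    using trm_bound[OF assms] by auto
  show "summable (\<lambda>n. WW w * LL ^ n)"
    using L_nn L_lt1 by (intro summable_mult summable_geometric) simp
qed

lemma bellman:
  assumes "joint_strategy E \<tau>"
  shows "val_strat w lam \<tau> u = w (u, \<tau> u) + lam (u, \<tau> u) * val_strat w lam \<tau> (\<tau> u)"
proof -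
  have s: "summable (trm w lam \<tau> u)" by (rule trm_summable[OF assms])
  have s2: "summable (trm w lam \<tau> (\<tau> u))" by (rule trm_summable[OF assms])
  have "suminf (trm w lam \<tau> u) = trm w lam \<tau> u 0 + (\<Sum>n. trm w lam \<tau> u (Suc n))"
    using suminf_split_head[OF s] by simp
  also have "(\<Sum>n. trm w lam \<tau> u (Suc n)) = lam (u, \<tau> u) * suminf (trm w lam \<tau> (\<tau> u))"
    by (simp add: trm_Suc suminf_mult[OF s2])
  finally show ?thesis by (simp add: val_trm trm_0)
qed

lemma lowerA:
  assumes j: "joint_strategy E \<tau>"
    and h: "\<And>u. y u \<le> w (u, \<tau> u) + lam (u, \<tau> u) * y (\<tau> u)"
  shows "y u \<le> val_strat w lam \<tau> u"
proof -
  define d where "d = (\<lambda>u. val_strat w lam \<tau> u - y u)"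
  obtain u0 where u0: "\<forall>u. d u0 \<le> d u" using fin_argmin[of "UNIV::'v set" d] by auto
  have e: "(u0, \<tau> u0) \<in> E" using j by (simp add: joint_strategy_def)
  define l where "l = lam (u0, \<tau> u0)"
  have l0: "0 \<le> l" "l < 1" using lam_nn[OF e] lam_lt1[OF e] l_def by auto
  have "d u0 \<ge> l * d (\<tau> u0)"
    using h[of u0] bellman[OF j, of w u0] unfolding d_def l_def by (simp add: algebra_simps)
  moreover have "l * d (\<tau> u0) \<ge> l * d u0" using u0 l0 by (simp add: mult_left_mono)
  ultimately have "(1 - l) * d u0 \<ge> 0" by (simp add: algebra_simps)
  then have "d u0 \<ge> 0" using l0 by (simp add: zero_le_mult_iff)
  then show ?thesis using u0 unfolding d_def by (metis diff_ge_0_iff_ge order_trans)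
qed

lemma upperA:
  assumes j: "joint_strategy E \<tau>"
    and h: "\<And>u. y u \<ge> w (u, \<tau> u) + lam (u, \<tau> u) * y (\<tau> u)"
  shows "y u \<ge> val_strat w lam \<tau> u"
proof -
  define d where "d = (\<lambda>u. y u - val_strat w lam \<tau> u)"
  obtain u0 where u0: "\<forall>u. d u0 \<le> d u" using fin_argmin[of "UNIV::'v set" d] by auto
  have e: "(u0, \<tau> u0) \<in> E" using j by (simp add: joint_strategy_def)
  define l where "l = lam (u0, \<tau> u0)"
  have l0: "0 \<le> l" "l < 1" using lam_nn[OF e] lam_lt1[OF e] l_def by auto
  have "d u0 \<ge> l * d (\<tau> u0)"
    using h[of u0] bellman[OF j, of w u0] unfolding d_def l_def by (simp add: algebra_simps)
  moreover have "l * d (\<tau> u0) \<ge> l * d u0" using u0 l0 by (simp add: mult_left_mono)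
  ultimately have "(1 - l) * d u0 \<ge> 0" by (simp add: algebra_simps)
  then have "d u0 \<ge> 0" using l0 by (simp add: zero_le_mult_iff)
  then show ?thesis using u0 unfolding d_def by (metis diff_ge_0_iff_ge order_trans)
qed

lemma perturb:
  assumes j: "joint_strategy E \<tau>"
    and h: "\<forall>e\<in>E. \<bar>w e - w' e\<bar> \<le> \<delta>"
  shows "\<bar>val_strat w lam \<tau> u - val_strat w' lam \<tau> u\<bar> \<le> \<delta> / (1 - LL)"
proof -
  define D where "D = (\<lambda>u. \<bar>val_strat w lam \<tau> u - val_strat w' lam \<tau> u\<bar>)"
  obtain u0 where u0: "\<forall>u. D u \<le> D u0" using fin_argmax[of "UNIV::'v set" D] by auto
  have e: "(u0, \<tau> u0) \<in> E" using j by (simp add: joint_strategy_def)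
  define l where "l = lam (u0, \<tau> u0)"
  have l0: "0 \<le> l" "l \<le> LL" using lam_nn[OF e] lam_le_L[OF e] l_def by auto
  have eq: "val_strat w lam \<tau> u0 - val_strat w' lam \<tau> u0 =
     (w (u0, \<tau> u0) - w' (u0, \<tau> u0)) + l * (val_strat w lam \<tau> (\<tau> u0) - val_strat w' lam \<tau> (\<tau> u0))"
    using bellman[OF j, of w u0] bellman[OF j, of w' u0] unfolding l_def by (simp add: algebra_simps)
  have a: "\<bar>w (u0, \<tau> u0) - w' (u0, \<tau> u0)\<bar> \<le> \<delta>" using h e by blast
  have b: "\<bar>l * (val_strat w lam \<tau> (\<tau> u0) - val_strat w' lam \<tau> (\<tau> u0))\<bar> = l * D (\<tau> u0)"
    unfolding D_def using l0 by (simp add: abs_mult)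
  have "D u0 \<le> \<delta> + l * D (\<tau> u0)"
  proof -
    have "D u0 = \<bar>(w (u0, \<tau> u0) - w' (u0, \<tau> u0)) + l * (val_strat w lam \<tau> (\<tau> u0) - val_strat w' lam \<tau> (\<tau> u0))\<bar>"
      unfolding D_def using eq by simp
    moreover have "\<bar>(w (u0, \<tau> u0) - w' (u0, \<tau> u0)) + l * (val_strat w lam \<tau> (\<tau> u0) - val_strat w' lam \<tau> (\<tau> u0))\<bar>
       \<le> \<bar>w (u0, \<tau> u0) - w' (u0, \<tau> u0)\<bar> + \<bar>l * (val_strat w lam \<tau> (\<tau> u0) - val_strat w' lam \<tau> (\<tau> u0))\<bar>"
      by (rule abs_triangle_ineq)
    ultimately show ?thesis using a b by linarith
  qed
  also have "l * D (\<tau> u0) \<le> LL * D u0"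
    using l0 u0 L_nn by (intro mult_mono) (auto simp: D_def)
  finally have "(1 - LL) * D u0 \<le> \<delta>" by (simp add: algebra_simps)
  then have "D u0 \<le> \<delta> / (1 - LL)" using L_lt1 by (simp add: field_simps)
  then show ?thesis using u0 D_def by (meson order_trans)
qed

definition SMax where "SMax = {s. strategy_on E Vmax s}"
definition SMin where "SMin = {s. strategy_on E (- Vmax) s}"

lemma SMax_ne: "SMax \<noteq> {}"
proof -
  have "(\<lambda>u. SOME v'. (u, v') \<in> E) \<in> SMax"
    unfolding SMax_def strategy_on_def using has_edge by (auto intro: someI_ex)
  then show ?thesis by auto
qed

lemma SMin_ne: "SMin \<noteq> {}"
proof -
  have "(\<lambda>u. SOME v'. (u, v') \<in> E) \<in> SMin"
    unfolding SMin_def strategy_on_def using has_edge by (auto intro: someI_ex)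
  then show ?thesis by auto
qed

lemma joint_combine: "s \<in> SMax \<Longrightarrow> t \<in> SMin \<Longrightarrow> joint_strategy E (combine Vmax s t)"
  unfolding SMax_def SMin_def strategy_on_def joint_strategy_def combine_def by auto

definition Sv :: "('v \<times> 'v \<Rightarrow> real) \<Rightarrow> ('v \<Rightarrow> 'v) \<Rightarrow> real" where
  "Sv w \<tau> = (\<Sum>u\<in>UNIV. val_strat w lam \<tau> u)"

definition BR :: "('v \<times> 'v \<Rightarrow> real) \<Rightarrow> ('v \<Rightarrow> 'v) \<Rightarrow> ('v \<Rightarrow> 'v)" where
  "BR w s = (SOME t. t \<in> SMin \<and> (\<forall>t'\<in>SMin. Sv w (combine Vmax s t) \<le> Sv w (combine Vmax s t')))"

lemma BR_prop: "BR w s \<in> SMin \<and> (\<forall>t'\<in>SMin. Sv w (combine Vmax s (BR w s)) \<le> Sv w (combine Vmax s t'))"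
proof -
  have "\<exists>t\<in>SMin. \<forall>t'\<in>SMin. Sv w (combine Vmax s t) \<le> Sv w (combine Vmax s t')"
    by (rule fin_argmin) (simp_all add: SMin_ne)
  then have "\<exists>t. t \<in> SMin \<and> (\<forall>t'\<in>SMin. Sv w (combine Vmax s t) \<le> Sv w (combine Vmax s t'))" by blast
  then show ?thesis unfolding BR_def by (rule someI_ex)
qed

lemma BR_in: "BR w s \<in> SMin" using BR_prop by blast

lemma BR_min_off:
  assumes s: "s \<in> SMax" and u: "u \<notin> Vmax" and e: "(u, u') \<in> E"
  shows "val_strat w lam (combine Vmax s (BR w s)) u \<le> w (u, u') + lam (u, u') * val_strat w lam (combine Vmax s (BR w s)) u'"
proof (rule ccontr)
  define t where "t = BR w s"
  define \<tau> where "\<tau> = combine Vmax s t"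
  define y where "y = val_strat w lam \<tau>"
  assume "\<not> ?thesis"
  hence lt: "w (u, u') + lam (u, u') * y u' < y u" unfolding y_def \<tau>_def t_def by simp
  have t: "t \<in> SMin" using BR_in t_def by blast
  define t' where "t' = t(u := u')"
  have t': "t' \<in> SMin" using t e u unfolding SMin_def strategy_on_def t'_def by auto
  define \<tau>' where "\<tau>' = combine Vmax s t'"
  have j: "joint_strategy E \<tau>" "joint_strategy E \<tau>'" using joint_combine s t t' \<tau>_def \<tau>'_def by auto
  have \<tau>'u: "\<tau>' u = u'" using u unfolding \<tau>'_def t'_def combine_def by simp
  have \<tau>'z: "z \<noteq> u \<Longrightarrow> \<tau>' z = \<tau> z" for z unfolding \<tau>'_def \<tau>_def t'_def combine_def by simp
  have up: "val_strat w lam \<tau>' z \<le> y z" for z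
  proof (rule upperA[OF j(2)])
    fix z
    show "w (z, \<tau>' z) + lam (z, \<tau>' z) * y (\<tau>' z) \<le> y z"
    proof (cases "z = u")
      case True then show ?thesis using lt \<tau>'u by simp
    next
      case False then show ?thesis using \<tau>'z[OF False] bellman[OF j(1), of w z] y_def by simp
    qed
  qed
  have "val_strat w lam \<tau>' u = w (u, u') + lam (u, u') * val_strat w lam \<tau>' u'"
    using bellman[OF j(2), of w u] \<tau>'u by simp
  also have "\<dots> \<le> w (u, u') + lam (u, u') * y u'"
    using up[of u'] lam_nn[OF e] by (simp add: mult_left_mono)
  also have "\<dots> < y u" by (rule lt)
  finally have strict: "val_strat w lam \<tau>' u < y u" .
  have "Sv w \<tau>' < Sv w \<tau>" unfolding Sv_def
    by (rule sum_strict_mono_ex1) (use up strict y_def in auto)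
  moreover have "Sv w \<tau> \<le> Sv w \<tau>'" using BR_prop t' unfolding \<tau>_def \<tau>'_def t_def by blast
  ultimately show False by simp
qed

definition Smx :: "('v \<times> 'v \<Rightarrow> real) \<Rightarrow> ('v \<Rightarrow> 'v)" where
  "Smx w = (SOME s. s \<in> SMax \<and> (\<forall>s'\<in>SMax. Sv w (combine Vmax s' (BR w s')) \<le> Sv w (combine Vmax s (BR w s))))"

lemma Smx_prop: "Smx w \<in> SMax \<and> (\<forall>s'\<in>SMax. Sv w (combine Vmax s' (BR w s')) \<le> Sv w (combine Vmax (Smx w) (BR w (Smx w))))"
proof -
  have "\<exists>s\<in>SMax. \<forall>s'\<in>SMax. Sv w (combine Vmax s' (BR w s')) \<le> Sv w (combine Vmax s (BR w s))"
    by (rule fin_argmax) (simp_all add: SMax_ne)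
  then have "\<exists>s. s \<in> SMax \<and> (\<forall>s'\<in>SMax. Sv w (combine Vmax s' (BR w s')) \<le> Sv w (combine Vmax s (BR w s)))" by blast
  then show ?thesis unfolding Smx_def by (rule someI_ex)
qed

definition Tau where "Tau w = combine Vmax (Smx w) (BR w (Smx w))"
definition YY where "YY w = val_strat w lam (Tau w)"

lemma Smx_in: "Smx w \<in> SMax" using Smx_prop by blast
lemma Tau_joint: "joint_strategy E (Tau w)"
  unfolding Tau_def using joint_combine Smx_in BR_in by blast

lemma Y_min_off: "u \<notin> Vmax \<Longrightarrow> (u, u') \<in> E \<Longrightarrow> YY w u \<le> w (u, u') + lam (u, u') * YY w u'"
  unfolding YY_def Tau_def by (rule BR_min_off[OF Smx_in])

lemma Y_max_off:
  assumes u: "u \<in> Vmax" and e: "(u, u') \<in> E"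
  shows "w (u, u') + lam (u, u') * YY w u' \<le> YY w u"
proof (rule ccontr)
  define s where "s = Smx w"
  define y where "y = YY w"
  assume "\<not> ?thesis"
  hence lt: "y u < w (u, u') + lam (u, u') * y u'" unfolding y_def by simp
  have s: "s \<in> SMax" using Smx_in s_def by blast
  define s' where "s' = s(u := u')"
  have s': "s' \<in> SMax" using s e u unfolding SMax_def strategy_on_def s'_def by auto
  define \<tau>' where "\<tau>' = combine Vmax s' (BR w s')"
  have j: "joint_strategy E (Tau w)" "joint_strategy E \<tau>'" using joint_combine s' BR_in \<tau>'_def Tau_joint by auto
  have \<tau>'u: "\<tau>' u = u'" using u unfolding \<tau>'_def s'_def combine_def by simp
  have lo: "y z \<le> val_strat w lam \<tau>' z" for z
  proof (rule lowerA[OF j(2)])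
    fix z
    show "y z \<le> w (z, \<tau>' z) + lam (z, \<tau>' z) * y (\<tau>' z)"
    proof (cases "z = u")
      case True then show ?thesis using lt \<tau>'u by simp
    next
      case False
      show ?thesis
      proof (cases "z \<in> Vmax")
        case True
        then have "\<tau>' z = Tau w z" using False unfolding \<tau>'_def Tau_def s'_def s_def combine_def by simp
        then show ?thesis using bellman[OF j(1), of w z] y_def YY_def by simp
      next
        case nv: False
        have "(z, \<tau>' z) \<in> E" using j(2) unfolding joint_strategy_def by blast
        then show ?thesis unfolding y_def by (rule Y_min_off[OF nv])
      qed
    qed
  qed
  have "y u < w (u, u') + lam (u, u') * y u'" by (rule lt)
  also have "\<dots> \<le> w (u, u') + lam (u, u') * val_strat w lam \<tau>' u'"
    using lo[of u'] lam_nn[OF e] by (simp add: mult_left_mono)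
  also have "\<dots> = val_strat w lam \<tau>' u"
    using bellman[OF j(2), of w u] \<tau>'u by simp
  finally have strict: "y u < val_strat w lam \<tau>' u" .
  have "Sv w (Tau w) < Sv w \<tau>'" unfolding Sv_def
    by (rule sum_strict_mono_ex1) (use lo strict y_def YY_def in auto)
  moreover have "Sv w \<tau>' \<le> Sv w (Tau w)" using Smx_prop s' unfolding \<tau>'_def Tau_def by blast
  ultimately show False by simp
qed

lemma game_val_Y: "game_val Vmax E w lam v = YY w v"
proof -
  have lower: "YY w v \<le> val_strat w lam (combine Vmax (Smx w) t) v" if t: "t \<in> SMin" for t
  proof (rule lowerA)
    show j: "joint_strategy E (combine Vmax (Smx w) t)" using joint_combine Smx_in t by blast
    fix z
    show "YY w z \<le> w (z, combine Vmax (Smx w) t z) + lam (z, combine Vmax (Smx w) t z) * YY w (combine Vmax (Smx w) t z)"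
    proof (cases "z \<in> Vmax")
      case True
      then have "combine Vmax (Smx w) t z = Tau w z" unfolding Tau_def combine_def by simp
      then show ?thesis using bellman[OF Tau_joint[of w], of w z] YY_def by simp
    next
      case False
      have "(z, combine Vmax (Smx w) t z) \<in> E" using j unfolding joint_strategy_def by blast
      then show ?thesis by (rule Y_min_off[OF False])
    qed
  qed
  have upper: "val_strat w lam (combine Vmax s (BR w (Smx w))) v \<le> YY w v" if s: "s \<in> SMax" for s
  proof (rule upperA)
    show j: "joint_strategy E (combine Vmax s (BR w (Smx w)))" using joint_combine s BR_in by blast
    fix z
    show "w (z, combine Vmax s (BR w (Smx w)) z) + lam (z, combine Vmax s (BR w (Smx w)) z) * YY w (combine Vmax s (BR w (Smx w)) z) \<le> YY w z"
    proof (cases "z \<in> Vmax")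
      case False
      then have "combine Vmax s (BR w (Smx w)) z = Tau w z" unfolding Tau_def combine_def by simp
      then show ?thesis using bellman[OF Tau_joint[of w], of w z] YY_def by simp
    next
      case True
      have "(z, combine Vmax s (BR w (Smx w)) z) \<in> E" using j unfolding joint_strategy_def by blast
      then show ?thesis by (rule Y_max_off[OF True])
    qed
  qed
  define f where "f = (\<lambda>s. INF t\<in>SMin. val_strat w lam (combine Vmax s t) v)"
  have f1: "YY w v \<le> f (Smx w)" unfolding f_def
    by (rule cINF_greatest[OF SMin_ne]) (rule lower)
  have f2: "f s \<le> YY w v" if s: "s \<in> SMax" for s
  proof -
    have "f s \<le> val_strat w lam (combine Vmax s (BR w (Smx w))) v"
      unfolding f_def by (rule cINF_lower[OF bdd_below_finite BR_in]) simp
    then show ?thesis using upper[OF s] by linarith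
  qed
  have gv: "game_val Vmax E w lam v = (SUP s\<in>SMax. f s)"
    unfolding game_val_def f_def SMax_def SMin_def by simp
  have "(SUP s\<in>SMax. f s) \<le> YY w v" by (rule cSUP_least[OF SMax_ne]) (rule f2)
  moreover have "f (Smx w) \<le> (SUP s\<in>SMax. f s)"
    by (rule cSUP_upper[OF Smx_in bdd_above_finite]) simp
  ultimately show ?thesis using gv f1 by linarith
qed

lemma co_opt_offsets:
  assumes co: "co_optimal Vmax E w lam \<sigma>" and e: "(a, b) \<in> E"
  shows "0 \<le> offset Vmax w lam (val_strat w lam \<sigma>) (a, b)"
proof -
  have "val_strat w lam \<sigma> = YY w" using co game_val_Y unfolding co_optimal_def by auto
  then show ?thesis using Y_min_off[OF _ e] Y_max_off[OF _ e] by auto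
qed

end

theorem lemma4p5:
  fixes Vmax :: "'v::finite set" and E :: "('v \<times> 'v) set"
    and w w' lam :: "'v \<times> 'v \<Rightarrow> real"
  assumes game: "discounted_game Vmax E lam"
    and not_all: "\<exists>\<sigma>. joint_strategy E \<sigma> \<and> \<not> co_optimal Vmax E w lam \<sigma>"
    and close: "\<forall>e\<in>E. \<bar>w e - w' e\<bar> \<le> (1 - contraction E lam) / 3 * gap Vmax E w lam"
  shows "\<forall>\<sigma>. co_optimal Vmax E w' lam \<sigma> \<longrightarrow> co_optimal Vmax E w lam \<sigma>"
proof -
  interpret dg Vmax E lam using game by (simp add: dg_def)
  define g where "g = gap Vmax E w lam"
  have L: "contraction E lam = LL" by (simp add: LL_def)
  have cl: "\<forall>e\<in>E. \<bar>w e - w' e\<bar> \<le> (1 - LL) / 3 * g" using close L g_def by simp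
  obtain e0 where e0: "e0 \<in> E" using E_ne by blast
  have dnn: "0 \<le> (1 - LL) / 3 * g" using cl e0 by (meson abs_ge_zero order_trans)
  have g0: "0 \<le> g" using dnn L_lt1 by (simp add: zero_le_mult_iff)
  have jc: "strategy_on E Vmax s \<Longrightarrow> strategy_on E (- Vmax) t \<Longrightarrow> joint_strategy E (combine Vmax s t)" for s t
    using joint_combine unfolding SMax_def SMin_def by blast
  show ?thesis
  proof (intro allI impI)
    fix \<sigma> assume co': "co_optimal Vmax E w' lam \<sigma>"
    have j\<sigma>: "joint_strategy E \<sigma>" using co' unfolding co_optimal_def by blast
    show "co_optimal Vmax E w lam \<sigma>"
    proof (cases "g = 0")
      case True
      have ww: "\<forall>e\<in>E. \<bar>w e - w' e\<bar> \<le> 0" using cl True by simp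
      have veq: "val_strat w lam \<tau> = val_strat w' lam \<tau>" if j: "joint_strategy E \<tau>" for \<tau>
      proof
        fix u
        have "\<bar>val_strat w lam \<tau> u - val_strat w' lam \<tau> u\<bar> \<le> 0 / (1 - LL)" by (rule perturb[OF j ww])
        then show "val_strat w lam \<tau> u = val_strat w' lam \<tau> u" by simp
      qed
      have "game_val Vmax E w lam = game_val Vmax E w' lam"
        unfolding game_val_def
      proof (intro ext SUP_cong INF_cong refl)
        fix v s t assume "s \<in> {s. strategy_on E Vmax s}" "t \<in> {s. strategy_on E (- Vmax) s}"
        then have "joint_strategy E (combine Vmax s t)" using jc by blast
        then show "val_strat w lam (combine Vmax s t) v = val_strat w' lam (combine Vmax s t) v"
          using veq by simp
      qed
      then show ?thesis using co' veq[OF j\<sigma>] unfolding co_optimal_def by simp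
    next
      case False
      hence gpos: "0 < g" using g0 by simp
      show ?thesis
      proof (rule ccontr)
        assume nc: "\<not> co_optimal Vmax E w lam \<sigma>"
        define x where "x = val_strat w lam \<sigma>"
        define x' where "x' = val_strat w' lam \<sigma>"
        have "g \<le> gamma_strat Vmax E w lam \<sigma>" unfolding g_def gap_def
          using nc j\<sigma> by (intro Min_le) auto
        hence m: "Min (offset Vmax w lam x ` E) \<le> -g" unfolding gamma_strat_def x_def by simp
        have "Min (offset Vmax w lam x ` E) \<in> offset Vmax w lam x ` E" using E_ne by simp
        then obtain a b where ab: "(a, b) \<in> E" "offset Vmax w lam x (a, b) = Min (offset Vmax w lam x ` E)"
          by auto
        have off: "offset Vmax w lam x (a, b) \<le> -g" using ab(2) m by simp
        have off': "0 \<le> offset Vmax w' lam x' (a, b)" using co_opt_offsets[OF co' ab(1)] x'_def by simp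
        have clab: "\<bar>w (a, b) - w' (a, b)\<bar> \<le> (1 - LL) / 3 * g" using cl ab(1) by blast
        have dx: "\<bar>x z - x' z\<bar> \<le> g / 3" for z
        proof -
          have "\<bar>x z - x' z\<bar> \<le> ((1 - LL) / 3 * g) / (1 - LL)" unfolding x_def x'_def
            by (rule perturb[OF j\<sigma> cl])
          also have "\<dots> = g / 3" using L_lt1 by (simp add: field_simps)
          finally show ?thesis .
        qed
        have lb0: "\<bar>lam (a, b) * (x b - x' b)\<bar> \<le> LL * (g / 3)"
          unfolding abs_mult using lam_nn[OF ab(1)] lam_le_L[OF ab(1)] dx[of b] L_nn
          by (intro mult_mono) auto
        have lb: "\<bar>lam (a, b) * x b - lam (a, b) * x' b\<bar> \<le> LL * g / 3"
          using lb0 by (simp add: right_diff_distrib)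
        have cl2: "(1 - LL) / 3 * g = g / 3 - LL * g / 3" by (simp add: field_simps)
        have dxa: "\<bar>x a - x' a\<bar> \<le> g / 3" by (rule dx)
        show False
        proof (cases "a \<in> Vmax")
          case True
          then have "x a - (w (a, b) + lam (a, b) * x b) \<le> -g"
            "0 \<le> x' a - (w' (a, b) + lam (a, b) * x' b)" using off off' by simp_all
          then show False using clab cl2 lb dxa gpos unfolding abs_le_iff by linarith
        next
          case False
          then have "(w (a, b) + lam (a, b) * x b) - x a \<le> -g"
            "0 \<le> (w' (a, b) + lam (a, b) * x' b) - x' a" using off off' by simp_all
          then show False using clab cl2 lb dxa gpos unfolding abs_le_iff by linarith
        qed
      qed
    qed
  qed
qed

end
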